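(* Let $X$ be a unital commutative semiring which is idempotent, linearly ordered by its intrinsic order, and such that for all $a,b,x\in X$ with $a<b$ one has $ax=0$ or $ax<bx$. The following are equivalent: (1) $\tilde{\mathcal{S}}(X)$ is fully elementary; (2) $\tilde{\mathcal{S}}(X)$ is Frobenius; (3) $X=\{0\}$.
   Context: A semiring $(X,+,0,\cdot)$: $(X,+,0)$ commutative monoid, $(X,\cdot)$ semigroup, distributivity, $0$ absorbing. Idempotent: $x+x=x$. Intrinsic order: $a\le b$ iff $a+x=b$ for some $x$; $a<b$ means $a\le b$, $a\ne b$. $\mathcal{S}(X)=X\times X$ with $(a',a'')+(b',b'')=(a'+b',a''+b'')$, $(a',a'')(b',b'')=(a'b'+a''b'',a'b''+a''b')$. Relation: $(a',a'')\sim(b',b'')$ iff $(a',a'')=(b',b'')$ or ($a'\ne a''$, $b'\ne b''$, $a'+b''=a''+b'$). Under the hypotheses $\sim$ is a congruence and $\tilde{\mathcal{S}}(X)=\mathcal{S}(X)/\sim$ is a unital commutative semiring. A unital commutative semiring $Y$ is Frobenius if $(x+y)^n=x^n+y^n$ for all $x,y\in Y$, $n\ge1$; polynomials over $Y$ are functions represented by formal expressions $\sum_k a_k\prod_j x_j^{d_{k,j}}$; symmetric if represented by an expression closed (with coefficients) under permuting variables; $e_j$ is the sum of all products of $j$ distinct variables; $Y$ is fully elementary if for every $n$ every symmetric polynomial in $n$ variables equals $r(e_1,\dots,e_n)$ on $Y^n$ for some polynomial $r$. *)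

theory Defs
  imports Main "HOL-Combinatorics.Permutations"
begin

text \<open>X is a type of sort {comm_semiring_0, comm_monoid_mult}: a unital commutative
semiring with absorbing 0, WITHOUT the axiom 0 \<noteq> 1 (so X = {0} is allowed).\<close>

definition intrinsic_le :: "'a::comm_monoid_add \<Rightarrow> 'a \<Rightarrow> bool" where
  "intrinsic_le a b \<longleftrightarrow> (\<exists>x. a + x = b)"

definition intrinsic_less :: "'a::comm_monoid_add \<Rightarrow> 'a \<Rightarrow> bool" where
  "intrinsic_less a b \<longleftrightarrow> intrinsic_le a b \<and> a \<noteq> b"

definition idempotent_sr :: "'a::comm_monoid_add itself \<Rightarrow> bool" where
  "idempotent_sr _ \<longleftrightarrow> (\<forall>x::'a. x + x = x)"

definition intrinsic_linear :: "'a::comm_monoid_add itself \<Rightarrow> bool" where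
  "intrinsic_linear _ \<longleftrightarrow> (\<forall>a b::'a. intrinsic_le a b \<or> intrinsic_le b a)"

definition sadd :: "'a::comm_semiring_0 \<times> 'a \<Rightarrow> 'a \<times> 'a \<Rightarrow> 'a \<times> 'a" where
  "sadd p q = (fst p + fst q, snd p + snd q)"

definition smul :: "'a::comm_semiring_0 \<times> 'a \<Rightarrow> 'a \<times> 'a \<Rightarrow> 'a \<times> 'a" where
  "smul p q = (fst p * fst q + snd p * snd q, fst p * snd q + snd p * fst q)"

definition szero :: "'a::comm_semiring_0 \<times> 'a" where
  "szero = (0, 0)"

definition sone :: "'a::{comm_semiring_0, comm_monoid_mult} \<times> 'a" where
  "sone = (1, 0)"

definition ssim :: "'a::comm_semiring_0 \<times> 'a \<Rightarrow> 'a \<times> 'a \<Rightarrow> bool" where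
  "ssim p q \<longleftrightarrow> p = q \<or> (fst p \<noteq> snd p \<and> fst q \<noteq> snd q \<and> fst p + snd q = snd p + fst q)"

definition simrel :: "('a::comm_semiring_0 \<times> 'a) rel" where
  "simrel = {(p, q). ssim p q}"

text \<open>The quotient S~(X) = S(X)/\<sim>, as a set of equivalence classes with induced operations
(well defined because \<sim> is a congruence under the standing hypotheses).\<close>

definition Scls :: "'a::comm_semiring_0 \<times> 'a \<Rightarrow> ('a \<times> 'a) set" where
  "Scls p = simrel `` {p}"

definition Stilde :: "('a::comm_semiring_0 \<times> 'a) set set" where
  "Stilde = UNIV // simrel"

definition qadd :: "('a::comm_semiring_0 \<times> 'a) set \<Rightarrow> ('a \<times> 'a) set \<Rightarrow> ('a \<times> 'a) set" where
  "qadd A B = Scls (sadd (SOME p. p \<in> A) (SOME q. q \<in> B))"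

definition qmul :: "('a::comm_semiring_0 \<times> 'a) set \<Rightarrow> ('a \<times> 'a) set \<Rightarrow> ('a \<times> 'a) set" where
  "qmul A B = Scls (smul (SOME p. p \<in> A) (SOME q. q \<in> B))"

definition qzero :: "('a::comm_semiring_0 \<times> 'a) set" where
  "qzero = Scls szero"

definition qone :: "('a::{comm_semiring_0, comm_monoid_mult} \<times> 'a) set" where
  "qone = Scls sone"

fun gpow :: "('b \<Rightarrow> 'b \<Rightarrow> 'b) \<Rightarrow> 'b \<Rightarrow> 'b \<Rightarrow> nat \<Rightarrow> 'b" where
  "gpow mul one x 0 = one"
| "gpow mul one x (Suc n) = mul x (gpow mul one x n)"

definition frobenius ::
  "'b set \<Rightarrow> ('b \<Rightarrow> 'b \<Rightarrow> 'b) \<Rightarrow> ('b \<Rightarrow> 'b \<Rightarrow> 'b) \<Rightarrow> 'b \<Rightarrow> bool" where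
  "frobenius Y add mul one \<longleftrightarrow>
     (\<forall>x\<in>Y. \<forall>y\<in>Y. \<forall>n\<ge>1. gpow mul one (add x y) n = add (gpow mul one x n) (gpow mul one y n))"

text \<open>Formal polynomial expressions in n variables x_0..x_(n-1):
  a list of terms (a_k, d_k), standing for \<Sum>_k a_k \<Prod>_(j<n) x_j^(d_k j).\<close>

type_synonym 'b pexpr = "('b \<times> (nat \<Rightarrow> nat)) list"

definition mon_eval ::
  "('b \<Rightarrow> 'b \<Rightarrow> 'b) \<Rightarrow> 'b \<Rightarrow> nat \<Rightarrow> (nat \<Rightarrow> nat) \<Rightarrow> (nat \<Rightarrow> 'b) \<Rightarrow> 'b" where
  "mon_eval mul one n d xs = foldr (\<lambda>j acc. mul (gpow mul one (xs j) (d j)) acc) [0..<n] one"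

definition peval ::
  "('b \<Rightarrow> 'b \<Rightarrow> 'b) \<Rightarrow> 'b \<Rightarrow> ('b \<Rightarrow> 'b \<Rightarrow> 'b) \<Rightarrow> 'b \<Rightarrow> nat \<Rightarrow> 'b pexpr \<Rightarrow> (nat \<Rightarrow> 'b) \<Rightarrow> 'b" where
  "peval add zero mul one n p xs =
     foldr (\<lambda>(c, d) acc. add (mul c (mon_eval mul one n d xs)) acc) p zero"

definition valid_pexpr :: "'b set \<Rightarrow> nat \<Rightarrow> 'b pexpr \<Rightarrow> bool" where
  "valid_pexpr Y n p \<longleftrightarrow> (\<forall>(c, d) \<in> set p. c \<in> Y \<and> (\<forall>j\<ge>n. d j = 0))"

text \<open>An expression is symmetric if (as a formal sum, i.e. a multiset of terms, coefficients
included) it is unchanged by every permutation of the variables.\<close>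

definition symmetric_pexpr :: "'b set \<Rightarrow> nat \<Rightarrow> 'b pexpr \<Rightarrow> bool" where
  "symmetric_pexpr Y n p \<longleftrightarrow> valid_pexpr Y n p \<and>
     (\<forall>\<sigma>. \<sigma> permutes {..<n} \<longrightarrow> mset (map (\<lambda>(c, d). (c, d \<circ> \<sigma>)) p) = mset p)"

definition symmetric_poly ::
  "'b set \<Rightarrow> ('b \<Rightarrow> 'b \<Rightarrow> 'b) \<Rightarrow> 'b \<Rightarrow> ('b \<Rightarrow> 'b \<Rightarrow> 'b) \<Rightarrow> 'b \<Rightarrow> nat \<Rightarrow> ((nat \<Rightarrow> 'b) \<Rightarrow> 'b) \<Rightarrow> bool" where
  "symmetric_poly Y add zero mul one n f \<longleftrightarrow>
     (\<exists>p. symmetric_pexpr Y n p \<and>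
          (\<forall>xs. (\<forall>i<n. xs i \<in> Y) \<longrightarrow> f xs = peval add zero mul one n p xs))"

definition elem_pexpr :: "'b \<Rightarrow> nat \<Rightarrow> nat \<Rightarrow> 'b pexpr" where
  "elem_pexpr one n j =
     map (\<lambda>l. (one, \<lambda>i. if i \<in> set l then 1 else 0)) (filter (\<lambda>l. length l = j) (subseqs [0..<n]))"

definition fully_elementary ::
  "'b set \<Rightarrow> ('b \<Rightarrow> 'b \<Rightarrow> 'b) \<Rightarrow> 'b \<Rightarrow> ('b \<Rightarrow> 'b \<Rightarrow> 'b) \<Rightarrow> 'b \<Rightarrow> bool" where
  "fully_elementary Y add zero mul one \<longleftrightarrow>
     (\<forall>n f. symmetric_poly Y add zero mul one n f \<longrightarrow>
        (\<exists>r. valid_pexpr Y n r \<and>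
             (\<forall>xs. (\<forall>i<n. xs i \<in> Y) \<longrightarrow>
                f xs = peval add zero mul one n r
                         (\<lambda>i. peval add zero mul one n (elem_pexpr one n (Suc i)) xs))))"

end

theory Submission
  imports Defs
begin


definition key :: "'a::comm_monoid_add \<times> 'a \<Rightarrow> 'a \<times> nat" where
  "key p = (fst p + snd p, if fst p = snd p then 0 else if fst p + snd p = fst p then 1 else 2)"

locale L =
  fixes X :: "'a::{comm_semiring_0,comm_monoid_mult} itself"
  assumes idem: "\<And>x::'a. x + x = x"
    and lin: "\<And>a b::'a. a + b = a \<or> a + b = b"
    and mono: "\<And>a b x::'a. a + b = b \<Longrightarrow> a \<noteq> b \<Longrightarrow> a*x = 0 \<or> (a*x + b*x = b*x \<and> a*x \<noteq> b*x)"
begin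

definition le :: "'a \<Rightarrow> 'a \<Rightarrow> bool" where "le x y \<longleftrightarrow> x + y = y"

lemma idem2: "(x::'a) + (x + y) = x + y"
  by (metis add.assoc idem)

lemma antisym: "(a::'a) + b = b \<Longrightarrow> a + b = a \<Longrightarrow> a = b" by simp

lemma trans: "(a::'a) + b = b \<Longrightarrow> b + c = c \<Longrightarrow> a + c = c"
  by (metis add.assoc)

lemma le_total: "le x y \<or> le y x" unfolding le_def using lin[of x y] by (auto simp: add.commute)
lemma le_trans: "le x y \<Longrightarrow> le y z \<Longrightarrow> le x z" unfolding le_def by (rule trans)
lemma le_antisym: "le x y \<Longrightarrow> le y x \<Longrightarrow> x = y" unfolding le_def by (simp add: add.commute)
lemma add_le: "x + y = (if le x y then y else x)"
  unfolding le_def using lin[of x y] by auto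

lemma ssim_key: "ssim (p::'a\<times>'a) q \<longleftrightarrow> key p = key q"
proof -
  obtain a b where p: "p = (a,b)" by fastforce
  obtain c d where q: "q = (c,d)" by fastforce
  show ?thesis unfolding p q ssim_def key_def
    apply (simp only: add_le[of a b] add_le[of c d] add_le[of a d] add_le[of b c] fst_conv snd_conv prod.inject)
    using le_total[of a b] le_total[of c d] le_total[of a c] le_total[of b d] le_total[of a d] le_total[of b c]
    by (auto split: if_splits; metis le_trans le_antisym)
qed

end



definition kadd :: "'a::comm_monoid_add \<times> nat \<Rightarrow> 'a \<times> nat \<Rightarrow> 'a \<times> nat" where
  "kadd k l = (fst k + fst l, if fst k = fst l then (if snd k = snd l then snd k else 0)
      else if fst k + fst l = fst k then snd k else snd l)"

definition kmul :: "'a::comm_semiring_0 \<times> nat \<Rightarrow> 'a \<times> nat \<Rightarrow> 'a \<times> nat" where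
  "kmul k l = (fst k * fst l, if fst k * fst l = 0 \<or> snd k = 0 \<or> snd l = 0 then 0
      else if snd k = snd l then 1 else 2)"

context L begin

lemma le_refl: "le x x" unfolding le_def by (simp add: idem)

lemma key_char: "key (x,y) = (if x = y then (x,0) else if le y x then (x,1) else (y,2))"
  unfolding key_def using le_total[of x y] by (auto simp: add_le dest: le_antisym)

lemma sign_cases: "x = y \<or> (le y x \<and> y \<noteq> x) \<or> (le x y \<and> x \<noteq> y)"
  using le_total[of x y] by auto

lemma key_sadd: "key (sadd p q) = kadd (key p) (key (q::'a\<times>'a))"
proof -
  obtain a b where p: "p = (a,b)" by fastforce
  obtain c d where q: "q = (c,d)" by fastforce
  show ?thesis unfolding p q sadd_def fst_conv snd_conv
    using sign_cases[of a b] sign_cases[of c d] le_total[of a c] le_total[of b d] le_total[of a d] le_total[of b c]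
    apply (elim disjE conjE)
    apply (simp_all add: key_char kadd_def add_le le_refl)
    apply (auto split: if_splits)
    apply (metis le_trans le_antisym)+
    done
qed

end



context L begin

lemma mul_le: "(a::'a) + b = b \<Longrightarrow> a*c + b*c = b*c"
  by (metis distrib_right)

lemma sum0: "(a::'a) + b = 0 \<Longrightarrow> a = 0"
  by (metis idem2 add_0_right)

lemma core:
  assumes ab: "(a::'a) + b = a" "a \<noteq> b" and cd: "c + d = c" "c \<noteq> d"
  shows "(a*c = 0 \<longrightarrow> a*c + b*d = 0 \<and> a*d + b*c = 0) \<and>
         (a*c \<noteq> 0 \<longrightarrow> a*c + b*d = a*c \<and> (a*d + b*c) + a*c = a*c \<and> a*d + b*c \<noteq> a*c)"
proof -
  have ba: "b + a = a" "b \<noteq> a" using ab by (auto simp: add.commute)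
  have dc: "d + c = c" "d \<noteq> c" using cd by (auto simp: add.commute)
  have 1: "b*c = 0 \<or> (b*c + a*c = a*c \<and> b*c \<noteq> a*c)" using mono[OF ba] .
  have 2: "d*a = 0 \<or> (d*a + c*a = c*a \<and> d*a \<noteq> c*a)" using mono[OF dc] .
  have 3: "b*d + a*d = a*d" using mul_le[OF ba(1)] .
  have 4: "a*d + a*c = a*c" using mul_le[OF dc(1), of a] by (simp add: mult.commute)
  have 5: "b*c + a*c = a*c" using mul_le[OF ba(1), of c] .
  have 6: "b*d + a*c = a*c" using 3 4 trans by blast
  show ?thesis
  proof (intro conjI impI)
    assume z: "a*c = 0"
    show "a*c + b*d = 0" using z 6 by (simp add: add.commute)
    show "a*d + b*c = 0" using z 4 5 by (metis add_0_right sum0 add.commute)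
  next
    assume nz: "a*c \<noteq> 0"
    show "a*c + b*d = a*c" using 6 by (simp add: add.commute)
    show "a*d + b*c + a*c = a*c" using 4 5 by (metis add.assoc)
    show "a*d + b*c \<noteq> a*c"
      using 1 2 nz lin[of "a*d" "b*c"] by (metis mult.commute)
  qed
qed

end



context L begin

lemma key_smul: "key (smul p q) = kmul (key p) (key (q::'a\<times>'a))"
proof -
  obtain a b where p: "p = (a,b)" by fastforce
  obtain c d where q: "q = (c,d)" by fastforce
  have m: "(a*c + b*d) + (a*d + b*c) = (a + b) * (c + d)" by (simp add: algebra_simps)
  have ab: "a + b = a \<and> a \<noteq> b \<or> b + a = b \<and> b \<noteq> a \<or> a = b" using lin[of a b] by (auto simp: add.commute)
  have cd: "c + d = c \<and> c \<noteq> d \<or> d + c = d \<and> d \<noteq> c \<or> c = d" using lin[of c d] by (auto simp: add.commute)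
  show ?thesis
  proof -
    { assume "a = b"
      hence ?thesis unfolding p q key_def kmul_def smul_def by (simp add: add.commute idem distrib_left distrib_right)
    } moreover
    { assume "c = d"
      hence ?thesis unfolding p q key_def kmul_def smul_def by (simp add: add.commute mult.commute idem distrib_left distrib_right add.left_commute)
    } moreover
    { assume h1: "a + b = a" "a \<noteq> b" and h2: "c + d = c" "c \<noteq> d"
      note co = core[OF h1 h2]
      hence ?thesis unfolding p q key_def kmul_def smul_def using h1 h2
        by (auto simp: m add.commute)
    } moreover
    { assume h1: "b + a = b" "b \<noteq> a" and h2: "c + d = c" "c \<noteq> d"
      note co = core[OF h1 h2]
      hence ?thesis unfolding p q key_def kmul_def smul_def using h1 h2
        by (auto simp: m add.commute)
    } moreover
    { assume h1: "a + b = a" "a \<noteq> b" and h2: "d + c = d" "d \<noteq> c"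
      note co = core[OF h1 h2]
      hence ?thesis unfolding p q key_def kmul_def smul_def using h1 h2
        by (auto simp: m add.commute)
    } moreover
    { assume h1: "b + a = b" "b \<noteq> a" and h2: "d + c = d" "d \<noteq> c"
      note co = core[OF h1 h2]
      hence ?thesis unfolding p q key_def kmul_def smul_def using h1 h2
        by (auto simp: m add.commute)
    }
    ultimately show ?thesis using ab cd by blast
  qed
qed

end



lemma Scls_set: "Scls p = {q. ssim p q}"
  unfolding Scls_def simrel_def by auto

lemma Scls_in_Stilde: "Scls p \<in> Stilde"
  unfolding Stilde_def Scls_def by (rule quotientI) simp

lemma Stilde_E: "A \<in> Stilde \<Longrightarrow> \<exists>p. A = Scls p"
  unfolding Stilde_def Scls_def by (erule quotientE) blast

context L begin

lemma Scls_key: "Scls (p::'a\<times>'a) = {q. key q = key p}"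
  unfolding Scls_set ssim_key by auto

lemma Scls_eq_iff: "Scls (p::'a\<times>'a) = Scls q \<longleftrightarrow> key p = key q"
proof
  assume "Scls p = Scls q"
  moreover have "p \<in> Scls p" unfolding Scls_key by simp
  ultimately have "p \<in> Scls q" by simp
  thus "key p = key q" unfolding Scls_key by simp
qed (simp add: Scls_key)

lemma some_key: "key (SOME x. x \<in> Scls (p::'a\<times>'a)) = key p"
proof -
  have "p \<in> Scls p" unfolding Scls_key by simp
  hence "(SOME x. x \<in> Scls p) \<in> Scls p" by (rule someI)
  thus ?thesis unfolding Scls_key by simp
qed

lemma qadd_Scls: "qadd (Scls p) (Scls q) = Scls (sadd p (q::'a\<times>'a))"
  unfolding qadd_def Scls_eq_iff key_sadd some_key ..

lemma qmul_Scls: "qmul (Scls p) (Scls q) = Scls (smul p (q::'a\<times>'a))"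
  unfolding qmul_def Scls_eq_iff key_smul some_key ..

lemma gpow_Scls: "gpow qmul qone (Scls p) n = Scls (gpow smul sone (p::'a\<times>'a) n)"
  by (induction n) (auto simp: qone_def qmul_Scls)

lemma qadd_range: "\<exists>s. qadd A B = Scls (s::'a\<times>'a)" unfolding qadd_def by blast
lemma qmul_range: "\<exists>s. qmul A B = Scls (s::'a\<times>'a)" unfolding qmul_def by blast

lemma peval_cons: "peval add zero mul one n ((c,d)#r) xs = add (mul c (mon_eval mul one n d xs)) (peval add zero mul one n r xs)"
  unfolding peval_def by simp
lemma peval_nil: "peval add zero mul one n [] xs = zero"
  unfolding peval_def by simp

lemma peval_range: "\<exists>s. peval qadd qzero qmul qone n r xs = Scls (s::'a\<times>'a)"
proof (cases r)
  case Nil thus ?thesis by (auto simp: peval_nil qzero_def simp del: split_paired_Ex)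
next
  case (Cons x r')
  obtain c d where "x = (c,d)" by fastforce
  thus ?thesis using Cons qadd_range by (simp add: peval_cons del: split_paired_Ex)
qed

lemma peval_down:
  assumes down: "\<And>p q. Q (key (sadd p q)) \<Longrightarrow> Q (key p) \<and> Q (key (q::'a\<times>'a))"
  shows "peval qadd qzero qmul qone n r xs = Scls (s::'a\<times>'a) \<Longrightarrow> Q (key s) \<Longrightarrow>
     (\<forall>(c,d)\<in>set r. \<exists>t. qmul c (mon_eval qmul qone n d xs) = Scls (t::'a\<times>'a) \<and> Q (key t))"
proof (induction r arbitrary: s)
  case Nil thus ?case by simp
next
  case (Cons cd r)
  obtain c d where cd: "cd = (c,d)" by fastforce
  obtain t where t: "qmul c (mon_eval qmul qone n d xs) = Scls (t::'a\<times>'a)" using qmul_range by blast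
  obtain a where a: "peval qadd qzero qmul qone n r xs = Scls (a::'a\<times>'a)" using peval_range by blast
  have "Scls (sadd t a) = Scls s" using Cons.prems(1) unfolding cd peval_cons t a qadd_Scls .
  hence "key (sadd t a) = key s" unfolding Scls_eq_iff .
  hence "Q (key t) \<and> Q (key a)" using down Cons.prems(2) by metis
  thus ?case using Cons.IH[OF a] t cd by (auto simp del: split_paired_Ex)
qed

lemma peval_exists:
  assumes up: "\<And>p q. Q (key (sadd p q)) \<Longrightarrow> Q (key p) \<or> Q (key (q::'a\<times>'a))"
    and z: "\<not> Q (key (szero::'a\<times>'a))"
  shows "peval qadd qzero qmul qone n r xs = Scls (s::'a\<times>'a) \<Longrightarrow> Q (key s) \<Longrightarrow>
     (\<exists>(c,d)\<in>set r. \<exists>t. qmul c (mon_eval qmul qone n d xs) = Scls (t::'a\<times>'a) \<and> Q (key t))"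
proof (induction r arbitrary: s)
  case Nil
  hence "key s = key (szero::'a\<times>'a)" by (simp add: peval_nil qzero_def Scls_eq_iff)
  thus ?case using z Nil by simp
next
  case (Cons cd r)
  obtain c d where cd: "cd = (c,d)" by fastforce
  obtain t where t: "qmul c (mon_eval qmul qone n d xs) = Scls (t::'a\<times>'a)" using qmul_range by blast
  obtain a where a: "peval qadd qzero qmul qone n r xs = Scls (a::'a\<times>'a)" using peval_range by blast
  have "Scls (sadd t a) = Scls s" using Cons.prems(1) unfolding cd peval_cons t a qadd_Scls .
  hence "key (sadd t a) = key s" unfolding Scls_eq_iff .
  hence "Q (key t) \<or> Q (key a)" using up Cons.prems(2) by metis
  thus ?case using Cons.IH[OF a] t cd by (auto simp del: split_paired_Ex)
qed

end



context L begin

lemma not_frob: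
  assumes nz: "(1::'a) \<noteq> 0"
  shows "\<not> frobenius (Stilde :: ('a \<times> 'a) set set) qadd qmul qone"
proof
  assume fr: "frobenius (Stilde :: ('a \<times> 'a) set set) qadd qmul qone"
  have "gpow qmul qone (qadd (Scls (1::'a,0::'a)) (Scls (0,1))) 2
        = qadd (gpow qmul qone (Scls (1::'a,0::'a)) 2) (gpow qmul qone (Scls (0,1)) 2)"
    using fr unfolding frobenius_def
    by (metis Scls_in_Stilde one_le_numeral)
  hence "Scls (gpow smul sone (sadd (1::'a,0::'a) (0,1)) 2) =
         Scls (sadd (gpow smul sone (1::'a,0::'a) 2) (gpow smul sone (0,1) 2))"
    by (simp add: qadd_Scls gpow_Scls)
  hence "Scls ((1::'a),(1::'a)) = Scls ((1::'a),(0::'a))"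
    by (simp add: numeral_2_eq_2 smul_def sadd_def sone_def idem)
  thus False using nz by (simp add: Scls_eq_iff key_def)
qed

end



context L begin

lemma E_vals:
  assumes "xs 0 = Scls (u::'a\<times>'a)" "xs 1 = Scls v"
  shows "peval qadd qzero qmul qone 2 (elem_pexpr qone 2 1) xs = Scls (sadd u v)"
    "peval qadd qzero qmul qone 2 (elem_pexpr qone 2 2) xs = Scls (smul u v)"
proof -
  obtain u1 u2 where u: "u = (u1,u2)" by fastforce
  obtain v1 v2 where v: "v = (v1,v2)" by fastforce
  have up: "[0..<2] = [0::nat,1]" by (simp add: numeral_2_eq_2)
  show "peval qadd qzero qmul qone 2 (elem_pexpr qone 2 1) xs = Scls (sadd u v)"
    unfolding elem_pexpr_def peval_def mon_eval_def up
    using assms apply (simp add: qone_def qzero_def qmul_Scls qadd_Scls gpow_Scls)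
    apply (simp add: u v smul_def sadd_def sone_def szero_def)
    done
  show "peval qadd qzero qmul qone 2 (elem_pexpr qone 2 2) xs = Scls (smul u v)"
    unfolding elem_pexpr_def peval_def mon_eval_def up
    using assms apply (simp add: qone_def qzero_def qmul_Scls qadd_Scls gpow_Scls)
    apply (simp add: u v smul_def sadd_def sone_def szero_def)
    done
qed

end



definition d20 :: "nat \<Rightarrow> nat" where "d20 = (\<lambda>i. if i = 0 then 2 else 0)"
definition d02 :: "nat \<Rightarrow> nat" where "d02 = (\<lambda>i. if i = 1 then 2 else 0)"

lemma perm2:
  assumes "\<sigma> permutes {..<(2::nat)}"
  shows "(\<sigma> 0 = 0 \<and> \<sigma> 1 = 1) \<or> (\<sigma> 0 = 1 \<and> \<sigma> 1 = 0)"
proof -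
  have "\<sigma> 0 \<in> {..<2}" "\<sigma> 1 \<in> {..<2}" using permutes_in_image[OF assms] by auto
  moreover have "\<sigma> 0 \<noteq> \<sigma> 1" using permutes_inj[OF assms] by (metis inj_eq zero_neq_one)
  ultimately show ?thesis by auto
qed

lemma perm2_d:
  assumes "\<sigma> permutes {..<(2::nat)}"
  shows "(d20 \<circ> \<sigma> = d20 \<and> d02 \<circ> \<sigma> = d02) \<or> (d20 \<circ> \<sigma> = d02 \<and> d02 \<circ> \<sigma> = d20)"
proof -
  have out: "\<And>i::nat. i \<ge> 2 \<Longrightarrow> \<sigma> i = i" using permutes_not_in[OF assms] by auto
  have c2: "\<And>i::nat. \<not> i \<ge> 2 \<Longrightarrow> i = 0 \<or> i = 1" by auto
  from perm2[OF assms] show ?thesis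
  proof
    assume h: "\<sigma> 0 = 0 \<and> \<sigma> 1 = 1"
    have "\<sigma> i = i" for i
    proof (cases "i \<ge> 2")
      case True thus ?thesis using out by blast
    next
      case False thus ?thesis using c2[OF False] h by auto
    qed
    hence "\<sigma> = id" by auto
    thus ?thesis by simp
  next
    assume h: "\<sigma> 0 = 1 \<and> \<sigma> 1 = 0"
    have a: "(d20 \<circ> \<sigma>) i = d02 i" "(d02 \<circ> \<sigma>) i = d20 i" for i
    proof -
      have "(i \<ge> 2 \<and> \<sigma> i = i) \<or> (i = 0 \<and> \<sigma> i = 1) \<or> (i = 1 \<and> \<sigma> i = 0)"
        using out c2 h by blast
      thus "(d20 \<circ> \<sigma>) i = d02 i" "(d02 \<circ> \<sigma>) i = d20 i"
        unfolding d20_def d02_def by auto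
    qed
    thus ?thesis by (simp add: fun_eq_iff)
  qed
qed

lemma sym_p: "Y1 \<in> Y \<Longrightarrow> symmetric_pexpr Y 2 [(Y1, d20), (Y1, d02)]"
proof -
  assume y: "Y1 \<in> Y"
  have v: "valid_pexpr Y 2 [(Y1, d20), (Y1, d02)]"
    unfolding valid_pexpr_def using y by (simp add: d20_def d02_def)
  have "mset (map (\<lambda>(c, d). (c, d \<circ> \<sigma>)) [(Y1, d20), (Y1, d02)]) = mset [(Y1, d20), (Y1, d02)]"
    if s: "\<sigma> permutes {..<2}" for \<sigma>
  proof -
    have e: "map (\<lambda>(c, d). (c, d \<circ> \<sigma>)) [(Y1, d20), (Y1, d02)] = [(Y1, d20 \<circ> \<sigma>), (Y1, d02 \<circ> \<sigma>)]"
      by simp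
    from perm2_d[OF s] show ?thesis
    proof
      assume "d20 \<circ> \<sigma> = d20 \<and> d02 \<circ> \<sigma> = d02" thus ?thesis unfolding e by simp
    next
      assume "d20 \<circ> \<sigma> = d02 \<and> d02 \<circ> \<sigma> = d20" thus ?thesis unfolding e
        by (simp add: add_mset_commute)
    qed
  qed
  thus ?thesis using v unfolding symmetric_pexpr_def by blast
qed

context L begin

lemma mon2:
  assumes "E 0 = Scls (e0::'a\<times>'a)" "E 1 = Scls e1"
  shows "mon_eval qmul qone 2 d E = Scls (smul (gpow smul sone e0 (d 0)) (smul (gpow smul sone e1 (d 1)) sone))"
proof -
  have up: "[0..<2] = [0::nat,1]" by (simp add: numeral_2_eq_2)
  show ?thesis unfolding mon_eval_def up using assms
    by (simp add: gpow_Scls) (simp add: qone_def qmul_Scls)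
qed

lemma fval:
  assumes "xs 0 = Scls (u::'a\<times>'a)" "xs 1 = Scls v"
  shows "peval qadd qzero qmul qone 2 [(qone, d20), (qone, d02)] xs =
     Scls (sadd (smul u (smul u sone)) (smul v (smul v sone)))"
proof -
  obtain u1 u2 where u: "u = (u1,u2)" by fastforce
  obtain v1 v2 where v: "v = (v1,v2)" by fastforce
  show ?thesis
    unfolding peval_def mon2[OF assms]
    by (simp add: d20_def d02_def qone_def qzero_def qmul_Scls qadd_Scls numeral_2_eq_2
        u v smul_def sadd_def sone_def szero_def)
qed

end



context L begin

lemma spow00: "gpow smul sone ((0::'a),(0::'a)) n = (if n = 0 then (1,0) else (0,0))"
  by (induction n) (auto simp: smul_def sone_def)
lemma spow11: "gpow smul sone ((1::'a),(1::'a)) n = (if n = 0 then (1,0) else (1,1))"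
  by (induction n) (auto simp: smul_def sone_def idem)
lemma spow01: "gpow smul sone ((0::'a),(1::'a)) n = (if even n then (1,0) else (0,1))"
  by (induction n) (auto simp: smul_def sone_def)

lemma key_mag0: "fst (key (p::'a\<times>'a)) = 0 \<Longrightarrow> snd (key p) = 0"
  unfolding key_def by (cases p) (auto dest: sum0 simp: add.commute)

lemma le_one_trans: "(m::'a) + 1 = 1 \<Longrightarrow> m1 + m2 = m \<Longrightarrow> m1 + 1 = 1 \<and> (m1 = 1 \<longrightarrow> m = 1)"
proof
  assume h: "(m::'a) + 1 = 1" "m1 + m2 = m"
  have "m1 + m = m" using h(2) idem2 by metis
  have "m1 + 1 = m1 + (m + 1)" using h(1) by simp
  also have "\<dots> = (m1 + m) + 1" by (simp add: add.assoc)
  also have "\<dots> = 1" using \<open>m1 + m = m\<close> h(1) by simp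
  finally show "m1 + 1 = 1" .
  show "m1 = 1 \<longrightarrow> m = 1"
  proof
    assume "m1 = 1"
    hence "m = 1 + m2" using h(2) by simp
    hence "m + 1 = m" by (metis add.commute idem2)
    thus "m = 1" using h(1) by simp
  qed
qed

definition QG :: "'a \<times> nat \<Rightarrow> bool" where
  "QG k \<longleftrightarrow> k = (1,1) \<or> (fst k + 1 = 1 \<and> fst k \<noteq> 1)"

lemma up1: "key (sadd p q) = (1, 1) \<Longrightarrow> key p = (1, 1) \<or> key (q::'a\<times>'a) = (1, 1)"
proof -
  assume h: "key (sadd p q) = (1, 1)"
  obtain m1 s1 where kp: "key p = (m1,s1)" by fastforce
  obtain m2 s2 where kq: "key q = (m2,s2)" by fastforce
  show ?thesis using h unfolding key_sadd kp kq kadd_def using lin[of m1 m2] by (auto split: if_splits simp: idem)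
qed

lemma down0: "key (sadd p q) = (0, 0) \<Longrightarrow> key p = (0, 0) \<and> key (q::'a\<times>'a) = (0, 0)"
  unfolding key_sadd kadd_def using key_mag0[of p] key_mag0[of q]
  by (auto split: if_splits dest: sum0 simp: add.commute prod_eq_iff)

lemma downG: "QG (key (sadd p q)) \<Longrightarrow> QG (key p) \<and> QG (key (q::'a\<times>'a))"
  proof -
    assume h0: "QG (key (sadd p q))"
    have h: "key (sadd p q) = (1,1) \<or> (fst (key (sadd p q)) + 1 = 1 \<and> fst (key (sadd p q)) \<noteq> 1)"
      using h0 unfolding QG_def .
    obtain m1 s1 where kp: "key p = (m1,s1)" by fastforce
    obtain m2 s2 where kq: "key q = (m2,s2)" by fastforce
    have ks: "key (sadd p q) = kadd (m1,s1) (m2,s2)" using key_sadd kp kq by simp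
    show ?thesis
    proof (cases "key (sadd p q) = (1,1)")
      case True
      hence e: "m1 + m2 = 1" using ks by (simp add: kadd_def)
      have a1: "m1 + 1 = 1" "m2 + 1 = 1" using le_one_trans[of 1 m1 m2] le_one_trans[of 1 m2 m1] e idem[of 1] by (auto simp: add.commute)
      show ?thesis using True ks a1 unfolding kp kq kadd_def
        by (auto split: if_splits simp: add.commute idem QG_def)
    next
      case False
      hence h2: "fst (kadd (m1,s1) (m2,s2)) + 1 = 1" "fst (kadd (m1,s1) (m2,s2)) \<noteq> 1" using h ks by auto
      hence "m1 + m2 + 1 = 1" "m1 + m2 \<noteq> 1" by (auto simp: kadd_def)
      thus ?thesis unfolding kp kq using le_one_trans[of "m1+m2" m1 m2] le_one_trans[of "m1+m2" m2 m1]
        by (auto simp: add.commute QG_def)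
    qed
  qed

lemma not_fe:
  assumes nz: "(1::'a) \<noteq> 0"
  shows "\<not> fully_elementary (Stilde :: ('a \<times> 'a) set set) qadd qzero qmul qone"
proof
  assume fe: "fully_elementary (Stilde :: ('a \<times> 'a) set set) qadd qzero qmul qone"
  let ?p = "[(qone::('a\<times>'a) set, d20), (qone, d02)]"
  let ?f = "\<lambda>xs. peval qadd qzero qmul qone 2 ?p xs"
  have "qone \<in> (Stilde :: ('a \<times> 'a) set set)" unfolding qone_def by (rule Scls_in_Stilde)
  hence spe: "symmetric_pexpr (Stilde :: ('a \<times> 'a) set set) 2 ?p" by (rule sym_p)
  have sp: "symmetric_poly (Stilde :: ('a \<times> 'a) set set) qadd qzero qmul qone 2 ?f"
    unfolding symmetric_poly_def
    apply (rule exI[where x="?p"])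
    using spe by simp
  have "\<exists>r. valid_pexpr (Stilde :: ('a \<times> 'a) set set) 2 r \<and>
             (\<forall>xs. (\<forall>i<2. xs i \<in> Stilde) \<longrightarrow>
                ?f xs = peval qadd qzero qmul qone 2 r
                         (\<lambda>i. peval qadd qzero qmul qone 2 (elem_pexpr qone 2 (Suc i)) xs))"
    using fe[unfolded fully_elementary_def, rule_format, OF sp] .
  then obtain r where val: "valid_pexpr (Stilde :: ('a \<times> 'a) set set) 2 r" and
    H: "\<forall>xs. (\<forall>i<2. xs i \<in> Stilde) \<longrightarrow> ?f xs = peval qadd qzero qmul qone 2 r
                (\<lambda>i. peval qadd qzero qmul qone 2 (elem_pexpr qone 2 (Suc i)) xs)"
    by blast
  define pt where "pt = (\<lambda>(u::'a\<times>'a) v i. if i = (0::nat) then Scls u else Scls v)"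
  have pt_in: "\<forall>i<2. pt u v i \<in> Stilde" for u v unfolding pt_def by (simp add: Scls_in_Stilde)
  have pt0: "pt u v 0 = Scls u" and pt1: "pt u v 1 = Scls v" for u v unfolding pt_def by auto
  define E where "E = (\<lambda>u v i. peval qadd qzero qmul qone 2 (elem_pexpr qone 2 (Suc i)) (pt u v))"
  have E0: "E u v 0 = Scls (sadd u v)" and E1: "E u v 1 = Scls (smul u v)" for u v
    unfolding E_def using E_vals[OF pt0 pt1] by (simp_all add: numeral_2_eq_2)
  have HH: "peval qadd qzero qmul qone 2 r (E u v) = Scls (sadd (smul u (smul u sone)) (smul v (smul v sone)))" for u v
  proof -
    have "?f (pt u v) = peval qadd qzero qmul qone 2 r (E u v)"
      using H pt_in[of u v] unfolding E_def by blast
    thus ?thesis using fval[OF pt0 pt1] by simp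
  qed
  have mon: "mon_eval qmul qone 2 d (E u v) = Scls (smul (gpow smul sone (sadd u v) (d 0)) (smul (gpow smul sone (smul u v) (d 1)) sone))" for d u v
    by (rule mon2[OF E0 E1])
  have trm: "qmul (Scls g) (mon_eval qmul qone 2 d (E u v)) = Scls (smul g (smul (gpow smul sone (sadd u v) (d 0)) (smul (gpow smul sone (smul u v) (d 1)) sone)))" for g d u v
    unfolding mon qmul_Scls ..
  have "\<exists>(c,d)\<in>set r. \<exists>t. qmul c (mon_eval qmul qone 2 d (E (0,1) (0,0))) = Scls t \<and> key t = (1,1)"
  proof (rule peval_exists[where Q = "\<lambda>k. k = (1,1)"])
    show "key (sadd p q) = (1, 1) \<Longrightarrow> key p = (1, 1) \<or> key q = (1, 1)" for p q :: "'a\<times>'a"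
      by (rule up1)
    show "key (szero::'a\<times>'a) \<noteq> (1,1)" using nz by (simp add: key_def szero_def)
    show "peval qadd qzero qmul qone 2 r (E (0,1) (0,0)) = Scls (sadd (smul (0,1) (smul (0,1) sone)) (smul (0,0) (smul (0,0) sone)))"
      by (rule HH)
    show "key (sadd (smul ((0::'a),(1::'a)) (smul (0,1) sone)) (smul (0,0) (smul (0,0) sone))) = (1,1)"
      using nz by (simp add: key_def smul_def sadd_def sone_def)
  qed
  then obtain c d t where cd: "(c,d) \<in> set r" and t: "qmul c (mon_eval qmul qone 2 d (E (0,1) (0,0))) = Scls t"
    and kt: "key t = (1,1)" by blast
  have "c \<in> Stilde" using val cd unfolding valid_pexpr_def by auto
  then obtain g where cg: "c = Scls g" using Stilde_E by blast
  obtain g1 g2 where g: "g = (g1, g2)" by fastforce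
  have k1: "key (smul g (smul (gpow smul sone (0,1) (d 0)) (smul (gpow smul sone (0,0) (d 1)) sone))) = (1,1)"
  proof -
    have "key (smul g (smul (gpow smul sone (sadd (0,1) (0,0)) (d 0)) (smul (gpow smul sone (smul (0,1) (0,0)) (d 1)) sone))) = (1,1)"
      using t kt unfolding cg trm Scls_eq_iff by simp
    moreover have "sadd ((0::'a),(1::'a)) (0,0) = (0,1)" "smul ((0::'a),(1::'a)) (0,0) = (0,0)"
      by (simp_all add: sadd_def smul_def)
    ultimately show ?thesis by simp
  qed
  have "\<forall>(c,d)\<in>set r. \<exists>t. qmul c (mon_eval qmul qone 2 d (E (0,0) (0,0))) = Scls t \<and> key t = (0,0)"
  proof (rule peval_down[where Q = "\<lambda>k. k = (0,0)"])
    show "key (sadd p q) = (0, 0) \<Longrightarrow> key p = (0, 0) \<and> key q = (0, 0)" for p q :: "'a\<times>'a"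
      by (rule down0)
    show "peval qadd qzero qmul qone 2 r (E (0,0) (0,0)) = Scls (sadd (smul (0,0) (smul (0,0) sone)) (smul (0,0) (smul (0,0) sone)))"
      by (rule HH)
    show "key (sadd (smul ((0::'a),(0::'a)) (smul (0,0) sone)) (smul (0,0) (smul (0,0) sone))) = (0,0)"
      by (simp add: key_def smul_def sadd_def sone_def)
  qed
  then obtain t0 where t0: "qmul c (mon_eval qmul qone 2 d (E (0,0) (0,0))) = Scls t0" and kt0: "key t0 = (0,0)"
    using cd by blast
  have k0: "key (smul g (smul (gpow smul sone (0,0) (d 0)) (smul (gpow smul sone (0,0) (d 1)) sone))) = (0,0)"
  proof -
    have "key (smul g (smul (gpow smul sone (sadd (0,0) (0,0)) (d 0)) (smul (gpow smul sone (smul (0,0) (0,0)) (d 1)) sone))) = (0,0)"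
      using t0 kt0 unfolding cg trm Scls_eq_iff by simp
    moreover have "sadd ((0::'a),(0::'a)) (0,0) = (0,0)" "smul ((0::'a),(0::'a)) (0,0) = (0,0)"
      by (simp_all add: sadd_def smul_def)
    ultimately show ?thesis by simp
  qed
  have "\<forall>(c,d)\<in>set r. \<exists>t. qmul c (mon_eval qmul qone 2 d (E (1,0) (0,1))) = Scls t \<and> QG (key t)"
  proof (rule peval_down[where Q = QG])
    show "QG (key (sadd p q)) \<Longrightarrow> QG (key p) \<and> QG (key q)" for p q :: "'a\<times>'a"
      by (rule downG)
    show "peval qadd qzero qmul qone 2 r (E (1,0) (0,1)) = Scls (sadd (smul (1,0) (smul (1,0) sone)) (smul (0,1) (smul (0,1) sone)))"
      by (rule HH)
    have "sadd (smul ((1::'a),(0::'a)) (smul (1,0) sone)) (smul (0,1) (smul (0,1) sone)) = (1,0)"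
      by (simp add: smul_def sadd_def sone_def idem)
    thus "QG (key (sadd (smul ((1::'a),(0::'a)) (smul (1,0) sone)) (smul (0,1) (smul (0,1) sone))))"
      using nz by (simp add: key_def QG_def)
  qed
  then obtain t2 where t2: "qmul c (mon_eval qmul qone 2 d (E (1,0) (0,1))) = Scls t2"
    and kt2: "QG (key t2)"
    using cd by blast
  have k2: "key (smul g (smul (gpow smul sone (1,1) (d 0)) (smul (gpow smul sone (0,1) (d 1)) sone))) = key t2"
  proof -
    have "key (smul g (smul (gpow smul sone (sadd (1,0) (0,1)) (d 0)) (smul (gpow smul sone (smul (1,0) (0,1)) (d 1)) sone))) = key t2"
      using t2 unfolding cg trm Scls_eq_iff by simp
    moreover have "sadd ((1::'a),(0::'a)) (0,1) = (1,1)" "smul ((1::'a),(0::'a)) (0,1) = (0,1)"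
      by (simp_all add: sadd_def smul_def)
    ultimately show ?thesis by simp
  qed
  have d1: "d 1 = 0"
  proof (rule ccontr)
    assume "d 1 \<noteq> 0"
    hence "smul g (smul (gpow smul sone (0,1) (d 0)) (smul (gpow smul sone ((0::'a),(0::'a)) (d 1)) sone)) = (0,0)"
      by (simp add: spow00) (simp add: smul_def sone_def g)
    hence "key (smul g (smul (gpow smul sone (0,1) (d 0)) (smul (gpow smul sone ((0::'a),(0::'a)) (d 1)) sone))) = (0,0)"
      by (simp add: key_def)
    thus False using k1 by simp
  qed
  have d0: "d 0 \<noteq> 0"
  proof
    assume z: "d 0 = 0"
    have "smul g (smul (gpow smul sone ((0::'a),(0::'a)) (d 0)) (smul (gpow smul sone ((0::'a),(0::'a)) (d 1)) sone)) = g"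
      "smul g (smul (gpow smul sone ((0::'a),(1::'a)) (d 0)) (smul (gpow smul sone ((0::'a),(0::'a)) (d 1)) sone)) = g"
      using z d1 by (simp_all add: spow00 spow01) (simp_all add: smul_def sone_def g)
    thus False using k0 k1 by simp
  qed
  have "fst (key g) = 1"
  proof (cases "even (d 0)")
    case True
    hence "smul g (smul (gpow smul sone ((0::'a),(1::'a)) (d 0)) (smul (gpow smul sone ((0::'a),(0::'a)) (d 1)) sone)) = g"
      using d1 by (simp add: spow00 spow01) (simp add: smul_def sone_def g)
    thus ?thesis using k1 by simp
  next
    case False
    hence "smul g (smul (gpow smul sone ((0::'a),(1::'a)) (d 0)) (smul (gpow smul sone ((0::'a),(0::'a)) (d 1)) sone)) = (g2, g1)"
      using d1 by (simp add: spow00 spow01) (simp add: smul_def sone_def g)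
    thus ?thesis using k1 by (simp add: key_def g add.commute)
  qed
  hence gs: "g1 + g2 = 1" by (simp add: key_def g)
  have "smul g (smul (gpow smul sone ((1::'a),(1::'a)) (d 0)) (smul (gpow smul sone ((0::'a),(1::'a)) (d 1)) sone)) = (1,1)"
    using d1 d0 gs by (simp add: spow11 spow01) (simp add: smul_def sone_def g add.commute)
  hence "key t2 = (1,0)" using k2 by (simp add: key_def idem)
  thus False using kt2 by (simp add: QG_def)
qed

end


lemma triv_Scls:
  assumes "(UNIV :: 'a::comm_semiring_0 set) = {0}"
  shows "Scls (p::'a\<times>'a) = Scls q"
proof -
  have "\<And>x::'a. x = 0" using assms by auto
  hence "p = q" by (metis prod.collapse)
  thus ?thesis by simp
qed

lemma peval_range0: "\<exists>s. peval qadd qzero qmul qone n r xs = Scls (s::'a::{comm_semiring_0,comm_monoid_mult}\<times>'a)"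
proof (cases r)
  case Nil thus ?thesis unfolding peval_def qzero_def by (auto simp del: split_paired_Ex)
next
  case (Cons x r')
  obtain c d where "x = (c,d)" by fastforce
  thus ?thesis using Cons unfolding peval_def qadd_def by (auto simp del: split_paired_Ex)
qed

theorem proposition6p4:
  fixes X :: "'a::{comm_semiring_0, comm_monoid_mult} itself"
  assumes idem: "idempotent_sr X"
    and lin: "intrinsic_linear X"
    and mono: "\<forall>a b x::'a. intrinsic_less a b \<longrightarrow> a * x = 0 \<or> intrinsic_less (a * x) (b * x)"
  shows "(fully_elementary (Stilde :: ('a \<times> 'a) set set) qadd qzero qmul qone
            \<longleftrightarrow> frobenius (Stilde :: ('a \<times> 'a) set set) qadd qmul qone)
       \<and> (frobenius (Stilde :: ('a \<times> 'a) set set) qadd qmul qone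
            \<longleftrightarrow> (UNIV :: 'a set) = {0})"
proof -
  have id: "\<And>x::'a. x + x = x" using idem unfolding idempotent_sr_def by blast
  have le_imp: "\<And>a b::'a. intrinsic_le a b \<Longrightarrow> a + b = b"
    unfolding intrinsic_le_def by (metis add.assoc id)
  have le_of: "\<And>a b::'a. a + b = b \<Longrightarrow> intrinsic_le a b"
    unfolding intrinsic_le_def by blast
  interpret L X
  proof
    fix a b :: 'a
    show "a + a = a" by (rule id)
    show "a + b = a \<or> a + b = b"
      using lin unfolding intrinsic_linear_def by (metis le_imp add.commute)
  next
    fix a b x :: 'a
    assume "a + b = b" "a \<noteq> b"
    hence "intrinsic_less a b" unfolding intrinsic_less_def using le_of by blast
    hence "a * x = 0 \<or> intrinsic_less (a * x) (b * x)" using mono by blast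
    thus "a * x = 0 \<or> (a * x + b * x = b * x \<and> a * x \<noteq> b * x)"
      unfolding intrinsic_less_def using le_imp by blast
  qed
  show ?thesis
  proof (cases "(UNIV :: 'a set) = {0}")
    case True
    have fr: "frobenius (Stilde :: ('a \<times> 'a) set set) qadd qmul qone"
      unfolding frobenius_def
    proof (intro ballI allI impI)
      fix x y :: "('a\<times>'a) set" and n :: nat
      assume "n \<ge> 1"
      then obtain m where n: "n = Suc m" by (cases n) auto
      have "\<exists>s1. gpow qmul qone (qadd x y) n = Scls (s1::'a\<times>'a)"
        unfolding n by (simp only: gpow.simps qmul_range)
      then obtain s1 where "gpow qmul qone (qadd x y) n = Scls (s1::'a\<times>'a)" by blast
      moreover obtain s2 where "qadd (gpow qmul qone x n) (gpow qmul qone y n) = Scls (s2::'a\<times>'a)"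
        using qadd_range by blast
      ultimately show "gpow qmul qone (qadd x y) n = qadd (gpow qmul qone x n) (gpow qmul qone y n)"
        using triv_Scls[OF True] by simp
    qed
    have fe: "fully_elementary (Stilde :: ('a \<times> 'a) set set) qadd qzero qmul qone"
      unfolding fully_elementary_def
    proof (intro allI impI)
      fix n and f :: "(nat \<Rightarrow> ('a\<times>'a) set) \<Rightarrow> ('a\<times>'a) set"
      assume "symmetric_poly (Stilde :: ('a \<times> 'a) set set) qadd qzero qmul qone n f"
      then obtain p where hp: "\<forall>xs. (\<forall>i<n. xs i \<in> Stilde) \<longrightarrow> f xs = peval qadd qzero qmul qone n p xs"
        unfolding symmetric_poly_def by blast
      show "\<exists>r. valid_pexpr Stilde n r \<and>
             (\<forall>xs. (\<forall>i<n. xs i \<in> Stilde) \<longrightarrow>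
                f xs = peval qadd qzero qmul qone n r
                         (\<lambda>i. peval qadd qzero qmul qone n (elem_pexpr qone n (Suc i)) xs))"
      proof (intro exI[of _ "[]"] conjI allI impI)
        show "valid_pexpr Stilde n []" unfolding valid_pexpr_def by simp
        fix xs :: "nat \<Rightarrow> ('a\<times>'a) set"
        assume "\<forall>i<n. xs i \<in> Stilde"
        hence "f xs = peval qadd qzero qmul qone n p xs" using hp by blast
        moreover obtain s where "peval qadd qzero qmul qone n p xs = Scls (s::'a\<times>'a)"
          using peval_range0 by blast
        ultimately show "f xs = peval qadd qzero qmul qone n []
                         (\<lambda>i. peval qadd qzero qmul qone n (elem_pexpr qone n (Suc i)) xs)"
          using triv_Scls[OF True] by (simp add: peval_def qzero_def)
      qed
    qed
    show ?thesis using fr fe True by simp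
  next
    case False
    then obtain z :: 'a where "z \<noteq> 0" by auto
    hence nz: "(1::'a) \<noteq> 0" by (metis mult_1_right mult_zero_right)
    show ?thesis using not_fe[OF nz] not_frob[OF nz] False by simp
  qed
qed

end
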